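(* Let $\mathcal S\subset M_n$ be a matricial system (a self-adjoint subspace of $M_n$ containing $I_n$). Then $\mathrm{Ind}_{\mathrm{CP}}(M_n:\mathcal S)^{-1}$ equals the optimal value of the semidefinite program $$\begin{aligned}&\text{maximize } \lambda\quad(\lambda\in\mathbb R,\ X\in M_n\otimes M_n)\\ &\text{subject to } (\mathrm{tr}\otimes\mathrm{id})(X)=(1-\lambda)I_n,\\ &\qquad X+\lambda\Delta_n\in M_n\otimes\mathcal S,\\ &\qquad X\in(M_n\otimes M_n)^+,\end{aligned}$$ where $\Delta_n=\sum_{i,j=1}^nE_{ij}\otimes E_{ij}$.
   Context: $E_{ij}$ are the matrix units of $M_n$, $\mathrm{tr}$ is the (unnormalized) trace on $M_n$, and $\mathrm{tr}\otimes\mathrm{id}:M_n\otimes M_n\to M_n$ is the partial trace over the first factor. $M_n\otimes\mathcal S$ is the subspace of $M_n\otimes M_n$ spanned by $A\otimes B$, $A\in M_n$, $B\in\mathcal S$. For an operator system $\mathcal X$ with unit $1$, $\mathrm{CP}_1(\mathcal X)$ is the set of completely positive $\varphi:\mathcal X\to\mathcal X$ with $\varphi(\mathbb C1)\subset\mathbb C1$, and for a subsystem $\mathcal X_0$, $\mathrm{Ind}_{\mathrm{CP}}(\mathcal X:\mathcal X_0)=\inf\{\|\varphi(1)\|:\varphi\in\mathrm{CP}_1(\mathcal X),\ \varphi(\mathcal X)\subset\mathcal X_0,\ \varphi-\mathrm{id}_{\mathcal X}\text{ completely positive}\}$. *)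

theory Defs
  imports Complex_Main "Jordan_Normal_Form.Matrix"
begin

text \<open>M_n \<otimes> M_n is identified with M_{n*n} via the Kronecker product, with the
  first tensor factor as the "outer" (block) index: (A \<otimes> B) at (i*n+k, j*n+l) is A(i,j)*B(k,l).\<close>

definition cadj :: "complex mat \<Rightarrow> complex mat" where
  "cadj A = mat (dim_col A) (dim_row A) (\<lambda>(i,j). cnj (A $$ (j,i)))"

definition psd :: "nat \<Rightarrow> complex mat \<Rightarrow> bool" where
  "psd m A \<longleftrightarrow> A \<in> carrier_mat m m \<and>
     (\<forall>v \<in> carrier_vec m. let q = (\<Sum>i<m. cnj (v $ i) * (A *\<^sub>v v) $ i) in Im q = 0 \<and> Re q \<ge> 0)"

definition vnorm :: "complex vec \<Rightarrow> real" where
  "vnorm v = sqrt (\<Sum>i<dim_vec v. (cmod (v $ i))\<^sup>2)"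

definition opnorm :: "nat \<Rightarrow> complex mat \<Rightarrow> real" where
  "opnorm n A = Sup {vnorm (A *\<^sub>v v) | v. v \<in> carrier_vec n \<and> vnorm v \<le> 1}"

definition matricial_system :: "nat \<Rightarrow> complex mat set \<Rightarrow> bool" where
  "matricial_system n S \<longleftrightarrow> S \<subseteq> carrier_mat n n \<and> 1\<^sub>m n \<in> S \<and>
     (\<forall>A\<in>S. \<forall>B\<in>S. A + B \<in> S) \<and> (\<forall>c. \<forall>A\<in>S. c \<cdot>\<^sub>m A \<in> S) \<and>
     (\<forall>A\<in>S. cadj A \<in> S)"

definition lin_map :: "nat \<Rightarrow> (complex mat \<Rightarrow> complex mat) \<Rightarrow> bool" where
  "lin_map n \<phi> \<longleftrightarrow> (\<forall>A \<in> carrier_mat n n. \<phi> A \<in> carrier_mat n n) \<and>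
     (\<forall>A \<in> carrier_mat n n. \<forall>B \<in> carrier_mat n n. \<phi> (A + B) = \<phi> A + \<phi> B) \<and>
     (\<forall>c. \<forall>A \<in> carrier_mat n n. \<phi> (c \<cdot>\<^sub>m A) = c \<cdot>\<^sub>m \<phi> A)"

definition block :: "nat \<Rightarrow> complex mat \<Rightarrow> nat \<Rightarrow> nat \<Rightarrow> complex mat" where
  "block n P a b = mat n n (\<lambda>(i,j). P $$ (a*n+i, b*n+j))"

text \<open>The amplification \<phi>^{(k)} = id_k \<otimes> \<phi> : M_k(M_n) \<rightarrow> M_k(M_n).\<close>
definition ampl :: "nat \<Rightarrow> nat \<Rightarrow> (complex mat \<Rightarrow> complex mat) \<Rightarrow> complex mat \<Rightarrow> complex mat" where
  "ampl n k \<phi> P = mat (k*n) (k*n) (\<lambda>(r,c). \<phi> (block n P (r div n) (c div n)) $$ (r mod n, c mod n))"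

definition comp_pos :: "nat \<Rightarrow> (complex mat \<Rightarrow> complex mat) \<Rightarrow> bool" where
  "comp_pos n \<phi> \<longleftrightarrow> lin_map n \<phi> \<and>
     (\<forall>k P. psd (k*n) P \<longrightarrow> psd (k*n) (ampl n k \<phi> P))"

definition CP1 :: "nat \<Rightarrow> (complex mat \<Rightarrow> complex mat) set" where
  "CP1 n = {\<phi>. comp_pos n \<phi> \<and> (\<forall>c. \<exists>d. \<phi> (c \<cdot>\<^sub>m 1\<^sub>m n) = d \<cdot>\<^sub>m 1\<^sub>m n)}"

definition Ind_CP :: "nat \<Rightarrow> complex mat set \<Rightarrow> real" where
  "Ind_CP n S = Inf {opnorm n (\<phi> (1\<^sub>m n)) | \<phi>. \<phi> \<in> CP1 n \<and>
      (\<forall>A \<in> carrier_mat n n. \<phi> A \<in> S) \<and> comp_pos n (\<lambda>A. \<phi> A - A)}"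

definition kron :: "nat \<Rightarrow> complex mat \<Rightarrow> complex mat \<Rightarrow> complex mat" where
  "kron n A B = mat (n*n) (n*n) (\<lambda>(r,c). A $$ (r div n, c div n) * B $$ (r mod n, c mod n))"

fun msum :: "nat \<Rightarrow> nat \<Rightarrow> (nat \<Rightarrow> complex mat) \<Rightarrow> complex mat" where
  "msum d 0 f = 0\<^sub>m d d"
| "msum d (Suc m) f = msum d m f + f m"

definition Eunit :: "nat \<Rightarrow> nat \<Rightarrow> nat \<Rightarrow> complex mat" where
  "Eunit n i j = mat n n (\<lambda>(r,c). if r = i \<and> c = j then 1 else 0)"

definition Delta :: "nat \<Rightarrow> complex mat" where
  "Delta n = msum (n*n) n (\<lambda>i. msum (n*n) n (\<lambda>j. kron n (Eunit n i j) (Eunit n i j)))"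

text \<open>Partial trace over the first factor, (tr \<otimes> id) : M_n \<otimes> M_n \<rightarrow> M_n.\<close>
definition ptrace1 :: "nat \<Rightarrow> complex mat \<Rightarrow> complex mat" where
  "ptrace1 n X = mat n n (\<lambda>(k,l). \<Sum>i<n. X $$ (i*n+k, i*n+l))"

definition tensor_span :: "nat \<Rightarrow> complex mat set \<Rightarrow> complex mat set" where
  "tensor_span n S = {X. \<exists>m A B. (\<forall>i<m. A i \<in> carrier_mat n n \<and> B i \<in> S) \<and>
      X = msum (n*n) m (\<lambda>i. kron n (A i) (B i))}"

definition sdp_value :: "nat \<Rightarrow> complex mat set \<Rightarrow> real" where
  "sdp_value n S = Sup {lam. \<exists>X. X \<in> carrier_mat (n*n) (n*n) \<and>
      ptrace1 n X = complex_of_real (1 - lam) \<cdot>\<^sub>m 1\<^sub>m n \<and>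
      X + complex_of_real lam \<cdot>\<^sub>m Delta n \<in> tensor_span n S \<and>
      psd (n*n) X}"

end

theory Submission
  imports Defs
begin

definition nonneg :: "complex \<Rightarrow> bool" where
  "nonneg z \<longleftrightarrow> Im z = 0 \<and> 0 \<le> Re z"

definition qf :: "nat \<Rightarrow> (nat \<Rightarrow> nat \<Rightarrow> complex) \<Rightarrow> (nat \<Rightarrow> complex) \<Rightarrow> complex" where
  "qf m F v = (\<Sum>i<m. cnj (v i) * (\<Sum>j<m. F i j * v j))"

definition psdf :: "nat \<Rightarrow> (nat \<Rightarrow> nat \<Rightarrow> complex) \<Rightarrow> bool" where
  "psdf m F \<longleftrightarrow> (\<forall>v. nonneg (qf m F v))"

lemma mult_if0R: "(x::complex) * (if P then y else 0) = (if P then x * y else 0)" by simp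
lemma mult_if0L: "(if P then y else 0) * (x::complex) = (if P then y * x else 0)" by simp
lemma cnj_if0: "cnj (if P then y else 0) = (if P then cnj y else 0)" by simp

lemma qf_two:
  assumes "i < m" "j < m" "i \<noteq> j"
  shows "qf m F (\<lambda>x. (if x = i then a else 0) + (if x = j then b else 0)) =
     cnj a * (F i i * a + F i j * b) + cnj b * (F j i * a + F j j * b)"
  using assms by (simp add: qf_def distrib_left distrib_right sum.distrib mult_if0R mult_if0L cnj_if0 sum.delta)

lemma qf_one:
  assumes "i < m"
  shows "qf m F (\<lambda>x. if x = i then a else 0) = cnj a * F i i * a"
  using assms by (simp add: qf_def mult_if0R mult_if0L cnj_if0 sum.delta)


lemma psdf_diag: assumes "psdf m F" "i < m" shows "nonneg (F i i)"
proof -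
  have "nonneg (qf m F (\<lambda>x. if x = i then 1 else 0))" using assms unfolding psdf_def by blast
  then show ?thesis using qf_one[OF assms(2), of F 1] by simp
qed

lemma psdf_herm: assumes "psdf m F" "i < m" "j < m" shows "F i j = cnj (F j i)"
proof (cases "i = j")
  case True
  then show ?thesis using psdf_diag[OF assms(1,2)] by (simp add: nonneg_def complex_eq_iff)
next
  case False
  have d1: "Im (F i i) = 0" "Im (F j j) = 0" using psdf_diag[OF assms(1,2)] psdf_diag[OF assms(1,3)]
    by (auto simp: nonneg_def)
  have "nonneg (qf m F (\<lambda>x. (if x = i then 1 else 0) + (if x = j then 1 else 0)))"
    using assms unfolding psdf_def by blast
  then have h1: "Im (F i j) + Im (F j i) = 0" using qf_two[OF assms(2,3) False, of F 1 1] d1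
    by (simp add: nonneg_def)
  have "nonneg (qf m F (\<lambda>x. (if x = i then 1 else 0) + (if x = j then \<i> else 0)))"
    using assms unfolding psdf_def by blast
  then have h2: "Re (F i j) - Re (F j i) = 0" using qf_two[OF assms(2,3) False, of F 1 \<i>] d1
    by (simp add: nonneg_def algebra_simps)
  show ?thesis using h1 h2 by (simp add: complex_eq_iff)
qed


lemma sum_if0: "(\<Sum>n\<in>A. if P then f n else (0::complex)) = (if P then (\<Sum>n\<in>A. f n) else 0)"
  by simp

lemma qf_shift: assumes "t < m"
  shows "qf m R (\<lambda>x. v x + (if x = t then s else 0)) = qf m R v + cnj s * (\<Sum>j<m. R t j * v j)
     + (\<Sum>i<m. cnj (v i) * R i t) * s + cnj s * R t t * s"
  using assms by (simp add: qf_def distrib_left distrib_right sum.distrib mult_if0R mult_if0L cnj_if0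
      sum_distrib_left sum_distrib_right mult_ac sum_if0)

lemma qf_sub_rank1:
  "qf m (\<lambda>i j. R i j - u i * cnj (u j)) v = qf m R v - (\<Sum>i<m. cnj (v i) * u i) * cnj (\<Sum>i<m. cnj (v i) * u i)"
  by (simp add: qf_def right_diff_distrib left_diff_distrib sum_subtractf sum_distrib_left sum_distrib_right mult_ac)
    (rule sum.swap)

lemma psdf_zero_row: assumes "psdf m R" "t < m" "R t t = 0" "j < m" shows "R t j = 0"
proof (rule ccontr)
  assume nz: "R t j \<noteq> 0"
  then have jt: "j \<noteq> t" using assms by auto
  define z where "z = R t j"
  have herm: "R j t = cnj z" using psdf_herm[OF assms(1,4,2)] z_def by simp
  have djj: "Im (R j j) = 0" using psdf_diag[OF assms(1,4)] by (simp add: nonneg_def)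
  define x :: real where "x = (Re (R j j) + 1) / (2 * (cmod z)^2)"
  have zpos: "(cmod z)^2 > 0" using nz z_def by simp
  define s where "s = - complex_of_real x * z"
  have "nonneg (qf m R (\<lambda>y. (if y = t then s else 0) + (if y = j then 1 else 0)))"
    using assms unfolding psdf_def by blast
  then have nn: "nonneg (cnj s * (R t t * s + R t j * 1) + cnj 1 * (R j t * s + R j j * 1))"
    using qf_two[OF assms(2,4) jt[symmetric], of R s 1] by simp
  define E where "E = cnj s * (R t t * s + R t j * 1) + cnj 1 * (R j t * s + R j j * 1)"
  have "E = R j j - 2 * complex_of_real x * (z * cnj z)"
    using assms(3) herm z_def s_def E_def by (simp add: algebra_simps)
  also have "z * cnj z = complex_of_real ((cmod z)^2)" by (metis complex_norm_square)
  finally have "E = R j j - complex_of_real (2 * x * (cmod z)^2)" by simp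
  then have "Re E = Re (R j j) - 2 * x * (cmod z)^2" by simp
  also have "\<dots> = -1" using zpos x_def by (simp add: field_simps)
  finally show False using nn E_def by (simp add: nonneg_def)
qed


lemma psdf_elim:
  assumes psd: "psdf m R" and t: "t < m" and r: "R t t = complex_of_real r" and rpos: "r > 0"
  defines "u \<equiv> \<lambda>i. R i t / complex_of_real (sqrt r)"
  shows "psdf m (\<lambda>i j. R i j - u i * cnj (u j))"
  unfolding psdf_def
proof
  fix v
  define g where "g = (\<Sum>j<m. R t j * v j)"
  have hg: "(\<Sum>i<m. cnj (v i) * R i t) = cnj g"
    unfolding g_def by (simp add: psdf_herm[OF psd t] mult.commute)
  have hw: "(\<Sum>i<m. cnj (v i) * u i) = cnj g / complex_of_real (sqrt r)"
    unfolding u_def using hg by (simp add: sum_divide_distrib[symmetric] mult.commute)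
  define s where "s = - g / complex_of_real r"
  have sq: "(complex_of_real (sqrt r))^2 = complex_of_real r"
    using rpos by (metis of_real_power less_imp_le real_sqrt_pow2)
  have "qf m (\<lambda>i j. R i j - u i * cnj (u j)) v = qf m R v - cnj g * g / complex_of_real r"
    unfolding qf_sub_rank1 hw using rpos
    using sq by (simp add: field_simps power2_eq_square[symmetric])
  also have "\<dots> = qf m R (\<lambda>x. v x + (if x = s_t then s else 0))" if "s_t = t" for s_t
    unfolding that qf_shift[OF t] g_def[symmetric] hg r s_def using rpos
    by (simp add: field_simps)
  finally show "nonneg (qf m (\<lambda>i j. R i j - u i * cnj (u j)) v)"
    using psd unfolding psdf_def by auto
qed


lemma psdf_decomp_aux:
  assumes "psdf m A"
  shows "t \<le> m \<Longrightarrow> \<exists>U R. psdf m R \<and> (\<forall>i<m. \<forall>j<m. A i j = (\<Sum>r<t. U r i * cnj (U r j)) + R i j)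
     \<and> (\<forall>i<m. \<forall>j<m. i < t \<or> j < t \<longrightarrow> R i j = 0)"
proof (induction t)
  case 0
  then show ?case using assms by (intro exI[of _ "\<lambda>_ _. 0"] exI[of _ A]) auto
next
  case (Suc t)
  then have t: "t < m" by simp
  from Suc.IH[OF Suc_leD[OF Suc.prems]] obtain U R where R: "psdf m R" and AU: "\<forall>i<m. \<forall>j<m. A i j = (\<Sum>r<t. U r i * cnj (U r j)) + R i j"
    and Z: "\<forall>i<m. \<forall>j<m. i < t \<or> j < t \<longrightarrow> R i j = 0" by blast
  show ?case
  proof (cases "R t t = 0")
    case True
    have row: "R t j = 0" if "j < m" for j using psdf_zero_row[OF R t True that] .
    have col: "R i t = 0" if "i < m" for i using psdf_herm[OF R that t] row[OF that] by simp
    have H1: "\<forall>i<m. \<forall>j<m. A i j = (\<Sum>r<Suc t. (U(t := \<lambda>_. 0)) r i * cnj ((U(t := \<lambda>_. 0)) r j)) + R i j"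
      using AU by simp
    have H2: "\<forall>i<m. \<forall>j<m. i < Suc t \<or> j < Suc t \<longrightarrow> R i j = 0"
      using Z row col by (auto simp: less_Suc_eq)
    show ?thesis using R H1 H2 by (intro exI conjI) (assumption)+
  next
    case False
    from psdf_diag[OF R t] have nn: "nonneg (R t t)" .
    define r where "r = Re (R t t)"
    have rr: "R t t = complex_of_real r" using nn r_def by (simp add: nonneg_def complex_eq_iff)
    have rpos: "r > 0" using nn False rr unfolding nonneg_def by auto
    define u where "u \<equiv> \<lambda>i. R i t / complex_of_real (sqrt r)"
    define R' where "R' = (\<lambda>i j. R i j - u i * cnj (u j))"
    have R': "psdf m R'" unfolding R'_def u_def by (rule psdf_elim[OF R t rr rpos])
    have sq: "complex_of_real (sqrt r) * complex_of_real (sqrt r) = complex_of_real r"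
      unfolding of_real_mult[symmetric] using rpos by simp
    have sq0: "complex_of_real (sqrt r) \<noteq> 0" using rpos by simp
    have H1: "\<forall>i<m. \<forall>j<m. A i j = (\<Sum>r<Suc t. (U(t := u)) r i * cnj ((U(t := u)) r j)) + R' i j"
      using AU by (simp add: R'_def)
    have H2: "R' i j = 0" if ij: "i < m" "j < m" "i < Suc t \<or> j < Suc t" for i j
    proof -
      have ht: "R t j = cnj (R j t)" using psdf_herm[OF R t ij(2)] .
      have ht2: "R i t = cnj (R t i)" using psdf_herm[OF R ij(1) t] .
      show "R' i j = 0"
      proof (cases "i < t \<or> j < t")
        case True
        then show ?thesis using Z ij t unfolding R'_def u_def by auto
      next
        case False
        then have "i = t \<or> j = t" using ij by auto
        then show ?thesis
        proof
          assume "i = t"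
          then show ?thesis unfolding R'_def u_def using rr sq sq0 ht
            by (simp add: field_simps)
        next
          assume "j = t"
          then show ?thesis unfolding R'_def u_def using rr sq sq0 ht2
            by (simp add: field_simps)
        qed
      qed
    qed
    have H2': "\<forall>i<m. \<forall>j<m. i < Suc t \<or> j < Suc t \<longrightarrow> R' i j = 0" using H2 by blast
    show ?thesis using R' H1 H2' by (intro exI conjI) (assumption)+
  qed
qed

lemma psdf_decomp:
  assumes "psdf m A"
  shows "\<exists>U. \<forall>i<m. \<forall>j<m. A i j = (\<Sum>r<m. U r i * cnj (U r j))"
proof -
  from psdf_decomp_aux[OF assms, of m] obtain U R where
    H1: "\<forall>i<m. \<forall>j<m. A i j = (\<Sum>r<m. U r i * cnj (U r j)) + R i j" and
    H2: "\<forall>i<m. \<forall>j<m. i < m \<or> j < m \<longrightarrow> R i j = 0" by blast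
  have "\<forall>i<m. \<forall>j<m. A i j = (\<Sum>r<m. U r i * cnj (U r j))" using H1 H2 by simp
  then show ?thesis by blast
qed


lemma sum_split_mult: "(\<Sum>r<k*n. f r) = (\<Sum>a<k. \<Sum>t<n. f (a*n+t :: nat) :: complex)"
proof (induction k)
  case 0 then show ?case by simp
next
  case (Suc k)
  have "{..<Suc k * n} = {..<k*n} \<union> {k*n..<k*n+n}" by auto
  then have "(\<Sum>r<Suc k*n. f r) = (\<Sum>r<k*n. f r) + (\<Sum>r\<in>{k*n..<k*n+n}. f r)"
    by (simp add: sum.union_disjoint ivl_disj_int)
  also have "(\<Sum>r\<in>{k*n..<k*n+n}. f r) = (\<Sum>t<n. f (k*n+t))"
    using sum.shift_bounds_nat_ivl[of f 0 "k*n" n] by (simp add: atLeast0LessThan add.commute)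
  finally show ?case using Suc by simp
qed

lemma divmod_simps: "t < n \<Longrightarrow> (a*n+t) div n = (a::nat)" "t < n \<Longrightarrow> (a*n+t) mod n = t"
  by auto

lemma perm7:
  "(\<Sum>a\<in>A. \<Sum>t\<in>B. \<Sum>b\<in>A. \<Sum>u\<in>B. \<Sum>i\<in>B. \<Sum>j\<in>B. \<Sum>s\<in>C. f a t b u i j s) =
   (\<Sum>s\<in>C. \<Sum>a\<in>A. \<Sum>i\<in>B. \<Sum>b\<in>A. \<Sum>j\<in>B. \<Sum>u\<in>B. \<Sum>t\<in>B. (f a t b u i j s :: complex))"
proof -
  have "(\<Sum>a\<in>A. \<Sum>t\<in>B. \<Sum>b\<in>A. \<Sum>u\<in>B. \<Sum>i\<in>B. \<Sum>j\<in>B. \<Sum>s\<in>C. f a t b u i j s) =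
     (\<Sum>a\<in>A. \<Sum>t\<in>B. \<Sum>b\<in>A. \<Sum>u\<in>B. \<Sum>i\<in>B. \<Sum>s\<in>C. \<Sum>j\<in>B. f a t b u i j s)"
    by (simp add: sum.swap[of _ B C])
  also have "\<dots> = (\<Sum>a\<in>A. \<Sum>t\<in>B. \<Sum>b\<in>A. \<Sum>u\<in>B. \<Sum>s\<in>C. \<Sum>i\<in>B. \<Sum>j\<in>B. f a t b u i j s)"
    by (simp add: sum.swap[of _ B C])
  also have "\<dots> = (\<Sum>a\<in>A. \<Sum>t\<in>B. \<Sum>b\<in>A. \<Sum>s\<in>C. \<Sum>u\<in>B. \<Sum>i\<in>B. \<Sum>j\<in>B. f a t b u i j s)"
    by (simp add: sum.swap[of _ B C])
  also have "\<dots> = (\<Sum>a\<in>A. \<Sum>t\<in>B. \<Sum>s\<in>C. \<Sum>b\<in>A. \<Sum>u\<in>B. \<Sum>i\<in>B. \<Sum>j\<in>B. f a t b u i j s)"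
    by (simp add: sum.swap[of _ A C])
  also have "\<dots> = (\<Sum>a\<in>A. \<Sum>s\<in>C. \<Sum>t\<in>B. \<Sum>b\<in>A. \<Sum>u\<in>B. \<Sum>i\<in>B. \<Sum>j\<in>B. f a t b u i j s)"
    by (simp add: sum.swap[of _ B C])
  also have "\<dots> = (\<Sum>s\<in>C. \<Sum>a\<in>A. \<Sum>t\<in>B. \<Sum>b\<in>A. \<Sum>u\<in>B. \<Sum>i\<in>B. \<Sum>j\<in>B. f a t b u i j s)"
    by (rule sum.swap)
  also have "\<dots> = (\<Sum>s\<in>C. \<Sum>a\<in>A. \<Sum>i\<in>B. \<Sum>b\<in>A. \<Sum>j\<in>B. \<Sum>u\<in>B. \<Sum>t\<in>B. f a t b u i j s)"
  proof (rule sum.cong[OF refl], rule sum.cong[OF refl])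
    fix s a
    show "(\<Sum>t\<in>B. \<Sum>b\<in>A. \<Sum>u\<in>B. \<Sum>i\<in>B. \<Sum>j\<in>B. f a t b u i j s) =
          (\<Sum>i\<in>B. \<Sum>b\<in>A. \<Sum>j\<in>B. \<Sum>u\<in>B. \<Sum>t\<in>B. f a t b u i j s)"
    proof -
      have "(\<Sum>t\<in>B. \<Sum>b\<in>A. \<Sum>u\<in>B. \<Sum>i\<in>B. \<Sum>j\<in>B. f a t b u i j s) =
         (\<Sum>(t,b,u,i,j)\<in>B\<times>A\<times>B\<times>B\<times>B. f a t b u i j s)"
        by (simp add: sum.cartesian_product case_prod_beta)
      also have "\<dots> = (\<Sum>(i,b,j,u,t)\<in>B\<times>A\<times>B\<times>B\<times>B. f a t b u i j s)"
        by (rule sum.reindex_bij_witness[where i="\<lambda>(i,b,j,u,t). (t,b,u,i,j)" and j="\<lambda>(t,b,u,i,j). (i,b,j,u,t)"]) auto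
      also have "\<dots> = (\<Sum>i\<in>B. \<Sum>b\<in>A. \<Sum>j\<in>B. \<Sum>u\<in>B. \<Sum>t\<in>B. f a t b u i j s)"
        by (simp add: sum.cartesian_product case_prod_beta)
      finally show ?thesis .
    qed
  qed
  finally show ?thesis .
qed

lemma key_identity:
  fixes P :: "nat \<Rightarrow> nat \<Rightarrow> complex"
  assumes n: "n > 0"
  shows "qf (k*n) (\<lambda>r c. \<Sum>i<n. \<Sum>j<n. P (r div n*n+i) (c div n*n+j) * (\<Sum>s<N. U s (i*n + r mod n) * cnj (U s (j*n + c mod n)))) v
  = (\<Sum>s<N. qf (k*n) P (\<lambda>x. \<Sum>l<n. cnj (U s ((x mod n)*n + l)) * v ((x div n)*n + l)))"
  using n
  apply (simp add: qf_def sum_split_mult divmod_simps sum_distrib_left sum_distrib_right)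
  apply (subst perm7)
  apply (simp add: mult_ac)
  done


lemma mult_mat_vec_entry:
  assumes "A \<in> carrier_mat m m" "v \<in> carrier_vec m" "i < m"
  shows "(A *\<^sub>v v) $ i = (\<Sum>j<m. A $$ (i,j) * v $ j)"
  using assms by (simp add: scalar_prod_def atLeast0LessThan)

lemma psd_iff_psdf: "psd m A \<longleftrightarrow> A \<in> carrier_mat m m \<and> psdf m (\<lambda>i j. A $$ (i,j))"
proof
  assume A: "psd m A"
  then have C: "A \<in> carrier_mat m m" by (simp add: psd_def)
  show "A \<in> carrier_mat m m \<and> psdf m (\<lambda>i j. A $$ (i,j))"
  proof (intro conjI C, unfold psdf_def, intro allI)
    fix v :: "nat \<Rightarrow> complex"
    have vc: "vec m v \<in> carrier_vec m" by simp
    from A vc have "let q = (\<Sum>i<m. cnj (vec m v $ i) * (A *\<^sub>v vec m v) $ i) in Im q = 0 \<and> Re q \<ge> 0"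
      unfolding psd_def by blast
    then have h: "Im (\<Sum>i<m. cnj (vec m v $ i) * (A *\<^sub>v vec m v) $ i) = 0 \<and> Re (\<Sum>i<m. cnj (vec m v $ i) * (A *\<^sub>v vec m v) $ i) \<ge> 0"
      by (simp only: Let_def)
    have eq: "(\<Sum>i<m. cnj (vec m v $ i) * (A *\<^sub>v vec m v) $ i) = qf m (\<lambda>i j. A $$ (i,j)) v"
      unfolding qf_def by (intro sum.cong refl) (simp add: mult_mat_vec_entry[OF C vc])
    show "nonneg (qf m (\<lambda>i j. A $$ (i,j)) v)" unfolding nonneg_def eq[symmetric] by (rule h)
  qed
next
  assume H: "A \<in> carrier_mat m m \<and> psdf m (\<lambda>i j. A $$ (i,j))"
  show "psd m A" unfolding psd_def
  proof (intro conjI ballI)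
    show "A \<in> carrier_mat m m" using H by simp
    fix v :: "complex vec" assume vc: "v \<in> carrier_vec m"
    have "(\<Sum>i<m. cnj (v $ i) * (A *\<^sub>v v) $ i) = qf m (\<lambda>i j. A $$ (i,j)) (\<lambda>i. v $ i)"
      unfolding qf_def using H by (intro sum.cong refl) (simp add: mult_mat_vec_entry[OF _ vc])
    moreover have "nonneg (qf m (\<lambda>i j. A $$ (i,j)) (\<lambda>i. v $ i))" using H by (simp add: psdf_def)
    ultimately show "let q = (\<Sum>i<m. cnj (v $ i) * (A *\<^sub>v v) $ i) in Im q = 0 \<and> Re q \<ge> 0"
      by (simp add: nonneg_def Let_def)
  qed
qed


definition choi_map :: "nat \<Rightarrow> complex mat \<Rightarrow> complex mat \<Rightarrow> complex mat" where
  "choi_map n C A = mat n n (\<lambda>(k,l). \<Sum>i<n. \<Sum>j<n. A $$ (i,j) * C $$ (i*n+k, j*n+l))"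

lemma idx_bound: "i < n \<Longrightarrow> t < n \<Longrightarrow> i*n + t < n*(n::nat)"
proof -
  assume a: "i < n" "t < n"
  have "i*n+t < (i+1)*n" using a by simp
  also have "\<dots> \<le> n*n" using a by (intro mult_le_mono1) simp
  finally show ?thesis .
qed

lemma qf_cong: "(\<And>i j. i < m \<Longrightarrow> j < m \<Longrightarrow> F i j = G i j) \<Longrightarrow> qf m F v = qf m G v"
  unfolding qf_def by (intro sum.cong refl) (simp)

lemma nonneg_sum: "(\<And>x. x \<in> A \<Longrightarrow> nonneg (f x)) \<Longrightarrow> nonneg (sum f A)"
  unfolding nonneg_def by (simp add: Im_sum Re_sum sum_nonneg)

lemma choi_map_lin: "lin_map n (choi_map n C)"
  unfolding lin_map_def
proof (intro conjI ballI allI)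
  fix A :: "complex mat" assume "A \<in> carrier_mat n n"
  show "choi_map n C A \<in> carrier_mat n n" by (simp add: choi_map_def)
next
  fix A B :: "complex mat" assume A: "A \<in> carrier_mat n n" and B: "B \<in> carrier_mat n n"
  show "choi_map n C (A + B) = choi_map n C A + choi_map n C B"
    by (rule eq_matI) (use A B in \<open>auto simp: choi_map_def distrib_right sum.distrib\<close>)
next
  fix c :: complex and A :: "complex mat" assume A: "A \<in> carrier_mat n n"
  show "choi_map n C (c \<cdot>\<^sub>m A) = c \<cdot>\<^sub>m choi_map n C A"
    by (rule eq_matI) (use A in \<open>auto simp: choi_map_def sum_distrib_left mult.assoc\<close>)
qed

lemma ampl_choi_entry:
  assumes "r < k*n" "c < k*n"
  shows "ampl n k (choi_map n C) P $$ (r,c) =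
    (\<Sum>i<n. \<Sum>j<n. P $$ (r div n*n+i, c div n*n+j) * C $$ (i*n + r mod n, j*n + c mod n))"
proof -
  have n: "n > 0" using assms by (cases n) auto
  show ?thesis using assms n by (simp add: ampl_def choi_map_def block_def)
qed

lemma choi_map_cp:
  assumes C: "psd (n*n) C"
  shows "comp_pos n (choi_map n C)"
  unfolding comp_pos_def
proof (intro conjI allI impI choi_map_lin)
  fix k P assume P: "psd (k*n) P"
  show "psd (k*n) (ampl n k (choi_map n C) P)"
    unfolding psd_iff_psdf
  proof (intro conjI)
    show "ampl n k (choi_map n C) P \<in> carrier_mat (k*n) (k*n)" by (simp add: ampl_def)
    show "psdf (k*n) (\<lambda>i j. ampl n k (choi_map n C) P $$ (i,j))"
    proof (cases "n = 0")
      case True then show ?thesis by (simp add: psdf_def qf_def nonneg_def)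
    next
      case False
      then have n: "n > 0" by simp
      from C have "psdf (n*n) (\<lambda>i j. C $$ (i,j))" by (simp add: psd_iff_psdf)
      from psdf_decomp[OF this] obtain U where U: "\<And>i j. i < n*n \<Longrightarrow> j < n*n \<Longrightarrow> C $$ (i,j) = (\<Sum>r<n*n. U r i * cnj (U r j))"
        by blast
      from P have Pf: "psdf (k*n) (\<lambda>i j. P $$ (i,j))" by (simp add: psd_iff_psdf)
      show ?thesis unfolding psdf_def
      proof
        fix v
        have "qf (k*n) (\<lambda>i j. ampl n k (choi_map n C) P $$ (i,j)) v =
          qf (k*n) (\<lambda>r c. \<Sum>i<n. \<Sum>j<n. P $$ (r div n*n+i, c div n*n+j) * (\<Sum>s<n*n. U s (i*n + r mod n) * cnj (U s (j*n + c mod n)))) v"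
          using n by (intro qf_cong) (simp add: ampl_choi_entry U idx_bound)
        also have "\<dots> = (\<Sum>s<n*n. qf (k*n) (\<lambda>i j. P $$ (i,j)) (\<lambda>x. \<Sum>l<n. cnj (U s ((x mod n)*n + l)) * v ((x div n)*n + l)))"
          by (rule key_identity[OF n])
        finally show "nonneg (qf (k*n) (\<lambda>i j. ampl n k (choi_map n C) P $$ (i,j)) v)"
          using Pf by (simp add: nonneg_sum psdf_def)
      qed
    qed
  qed
qed


lemma msum_carrier: "(\<And>i. i < m \<Longrightarrow> f i \<in> carrier_mat d d) \<Longrightarrow> msum d m f \<in> carrier_mat d d"
  by (induction m) auto

lemma msum_index: "(\<And>i. i < m \<Longrightarrow> f i \<in> carrier_mat d d) \<Longrightarrow> i < d \<Longrightarrow> j < d \<Longrightarrow>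
    msum d m f $$ (i,j) = (\<Sum>s<m. f s $$ (i,j))"
proof (induction m)
  case 0 then show ?case by simp
next
  case (Suc m)
  have c: "msum d m f \<in> carrier_mat d d" using Suc.prems by (intro msum_carrier) auto
  have c2: "f m \<in> carrier_mat d d" using Suc.prems by auto
  have "(msum d m f + f m) $$ (i,j) = msum d m f $$ (i,j) + f m $$ (i,j)"
    using c2 Suc.prems(2,3) by (simp add: carrier_matD)
  then show ?case using Suc c by simp
qed

lemma div_lt: "r < n*n \<Longrightarrow> r div n < (n::nat)"
  by (simp add: less_mult_imp_div_less)
lemma mod_lt: "r < n*n \<Longrightarrow> r mod n < (n::nat)"
  by (cases n) auto

lemma sum2_delta: "x < (n::nat) \<Longrightarrow> y < n \<Longrightarrow> (\<Sum>i<n. \<Sum>j<n. if x = i \<and> y = j then g i j else (0::complex)) = g x y"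
proof -
  assume a: "x < n" "y < n"
  have "(\<Sum>i<n. \<Sum>j<n. if x = i \<and> y = j then g i j else (0::complex)) = (\<Sum>i<n. if x = i then g i y else 0)"
    using a by (intro sum.cong refl) (auto simp: sum.delta sum.delta')
  also have "\<dots> = g x y" using a by (simp add: sum.delta sum.delta')
  finally show ?thesis .
qed

lemma Delta_carrier: "Delta n \<in> carrier_mat (n*n) (n*n)"
  unfolding Delta_def by (intro msum_carrier) (simp add: kron_def)

lemma Delta_entry: assumes "r < n*n" "c < n*n"
  shows "Delta n $$ (r,c) = (if r div n = r mod n \<and> c div n = c mod n then 1 else 0)"
proof -
  have "Delta n $$ (r,c) = (\<Sum>i<n. \<Sum>j<n. kron n (Eunit n i j) (Eunit n i j) $$ (r,c))"
    unfolding Delta_def using assms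
    by (simp add: msum_index msum_carrier kron_def)
  also have "\<dots> = (\<Sum>i<n. \<Sum>j<n. (if r div n = i \<and> c div n = j then 1 else 0) * (if r mod n = i \<and> c mod n = j then 1 else 0))"
    using assms div_lt mod_lt by (simp add: kron_def Eunit_def)
  also have "\<dots> = (\<Sum>i<n. \<Sum>j<n. if r div n = i \<and> c div n = j then (if r mod n = r div n \<and> c mod n = c div n then 1 else 0) else 0)"
    by (intro sum.cong refl) auto
  also have "\<dots> = (if r mod n = r div n \<and> c mod n = c div n then 1 else 0)"
    using div_lt[OF assms(1)] div_lt[OF assms(2)] by (rule sum2_delta)
  also have "\<dots> = (if r div n = r mod n \<and> c div n = c mod n then 1 else 0)" by auto
  finally show ?thesis .
qed


definition choi :: "nat \<Rightarrow> (complex mat \<Rightarrow> complex mat) \<Rightarrow> complex mat" where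
  "choi n \<phi> = ampl n n \<phi> (Delta n)"

lemma block_Delta: assumes "a < n" "b < n" shows "block n (Delta n) a b = Eunit n a b"
proof (rule eq_matI)
  fix i j assume ij: "i < dim_row (Eunit n a b)" "j < dim_col (Eunit n a b)"
  then have ij': "i < n" "j < n" by (auto simp: Eunit_def)
  have b1: "a*n+i < n*n" "b*n+j < n*n" using idx_bound assms ij' by auto
  show "block n (Delta n) a b $$ (i, j) = Eunit n a b $$ (i, j)"
    using ij' b1 by (simp add: block_def Delta_entry Eunit_def divmod_simps)
qed (auto simp: block_def Eunit_def)

lemma psd_Delta: "psd (n*n) (Delta n)"
  unfolding psd_iff_psdf
proof (intro conjI Delta_carrier, unfold psdf_def, intro allI)
  fix v
  show "nonneg (qf (n*n) (\<lambda>i j. Delta n $$ (i,j)) v)"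
  proof (cases "n = 0")
    case True then show ?thesis by (simp add: qf_def nonneg_def)
  next
    case False
    define S where "S = (\<Sum>b<n. v (b*n+b))"
    have "qf (n*n) (\<lambda>i j. Delta n $$ (i,j)) v =
       qf (n*n) (\<lambda>r c. if r div n = r mod n \<and> c div n = c mod n then 1 else 0) v"
      by (rule qf_cong) (simp add: Delta_entry)
    also have "\<dots> = (\<Sum>a<n. \<Sum>t<n. cnj (v (a*n+t)) * (\<Sum>b<n. \<Sum>u<n. (if a = t \<and> b = u then 1 else 0) * v (b*n+u)))"
      using False by (simp add: qf_def sum_split_mult divmod_simps)
    also have "\<dots> = (\<Sum>a<n. \<Sum>t<n. cnj (v (a*n+t)) * (if a = t then S else 0))"
    proof (intro sum.cong refl)
      fix a t assume "a \<in> {..<n}" "t \<in> {..<n}"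
      have "(\<Sum>b<n. \<Sum>u<n. (if a = t \<and> b = u then 1 else 0) * v (b*n+u)) = (\<Sum>b<n. if a = t then v (b*n+b) else 0)"
        by (intro sum.cong refl) (auto simp: mult_if0L sum.delta)
      then show "cnj (v (a*n+t)) * (\<Sum>b<n. \<Sum>u<n. (if a = t \<and> b = u then 1 else 0) * v (b*n+u)) =
          cnj (v (a*n+t)) * (if a = t then S else 0)" by (simp add: S_def)
    qed
    also have "\<dots> = (\<Sum>a<n. cnj (v (a*n+a)) * S)"
      by (intro sum.cong refl) (simp add: mult_if0R sum.delta')
    also have "\<dots> = cnj S * S" by (simp add: S_def cnj_sum sum_distrib_right)
    finally show ?thesis by (simp add: nonneg_def)
  qed
qed

lemma choi_entry: assumes "i < n" "j < n" "k < n" "l < n"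
  shows "choi n \<phi> $$ (i*n+k, j*n+l) = \<phi> (Eunit n i j) $$ (k,l)"
proof -
  have b1: "i*n+k < n*n" "j*n+l < n*n" using idx_bound assms by auto
  show ?thesis using assms b1 by (simp add: choi_def ampl_def divmod_simps block_Delta)
qed

lemma choi_carrier: "choi n \<phi> \<in> carrier_mat (n*n) (n*n)"
  by (simp add: choi_def ampl_def)

lemma choi_psd: "comp_pos n \<phi> \<Longrightarrow> psd (n*n) (choi n \<phi>)"
  unfolding comp_pos_def choi_def using psd_Delta by blast

lemma lin_zero: assumes "lin_map n \<phi>" shows "\<phi> (0\<^sub>m n n) = 0\<^sub>m n n"
proof -
  have c: "\<phi> (0\<^sub>m n n) \<in> carrier_mat n n" using assms by (simp add: lin_map_def)
  have "\<phi> (0\<^sub>m n n) = \<phi> ((0::complex) \<cdot>\<^sub>m 0\<^sub>m n n)" by (simp add: smult_zero_mat)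
  also have "\<dots> = 0 \<cdot>\<^sub>m \<phi> (0\<^sub>m n n)" using assms zero_carrier_mat[of n n] unfolding lin_map_def by blast
  also have "\<dots> = 0\<^sub>m n n" using c by (intro eq_matI) auto
  finally show ?thesis .
qed

lemma lin_msum: assumes "lin_map n \<phi>"
  shows "(\<And>i. i < m \<Longrightarrow> f i \<in> carrier_mat n n) \<Longrightarrow> \<phi> (msum n m f) = msum n m (\<lambda>i. \<phi> (f i))"
proof (induction m)
  case 0 then show ?case using lin_zero[OF assms] by simp
next
  case (Suc m)
  have c: "msum n m f \<in> carrier_mat n n" using Suc.prems by (intro msum_carrier) auto
  have c2: "f m \<in> carrier_mat n n" using Suc.prems by auto
  have "\<phi> (msum n (Suc m) f) = \<phi> (msum n m f) + \<phi> (f m)"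
    using assms c c2 by (simp add: lin_map_def)
  then show ?case using Suc by simp
qed

lemma Eunit_carrier[simp]: "Eunit n i j \<in> carrier_mat n n" by (simp add: Eunit_def)
lemma Eunit_dims[simp]: "dim_row (Eunit n i j) = n" "dim_col (Eunit n i j) = n" by (simp_all add: Eunit_def)

lemma mat_expand: assumes A: "A \<in> carrier_mat n n"
  shows "A = msum n n (\<lambda>i. msum n n (\<lambda>j. A $$ (i,j) \<cdot>\<^sub>m Eunit n i j))"
proof -
  have c: "msum n n (\<lambda>i. msum n n (\<lambda>j. A $$ (i,j) \<cdot>\<^sub>m Eunit n i j)) \<in> carrier_mat n n"
    by (intro msum_carrier) auto
  show ?thesis
  proof (rule eq_matI)
  fix k l assume kl: "k < dim_row (msum n n (\<lambda>i. msum n n (\<lambda>j. A $$ (i,j) \<cdot>\<^sub>m Eunit n i j)))"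
      "l < dim_col (msum n n (\<lambda>i. msum n n (\<lambda>j. A $$ (i,j) \<cdot>\<^sub>m Eunit n i j)))"
  then have kl': "k < n" "l < n" using c by auto
  have "msum n n (\<lambda>i. msum n n (\<lambda>j. A $$ (i,j) \<cdot>\<^sub>m Eunit n i j)) $$ (k,l)
      = (\<Sum>i<n. \<Sum>j<n. A $$ (i,j) * Eunit n i j $$ (k,l))"
    using kl' by (simp add: msum_index msum_carrier)
  also have "\<dots> = (\<Sum>i<n. \<Sum>j<n. if k = i \<and> l = j then A $$ (i,j) else 0)"
    using kl' by (intro sum.cong refl) (auto simp: Eunit_def)
  also have "\<dots> = A $$ (k,l)" using kl' by (rule sum2_delta)
  finally show "A $$ (k,l) = msum n n (\<lambda>i. msum n n (\<lambda>j. A $$ (i,j) \<cdot>\<^sub>m Eunit n i j)) $$ (k,l)" by simp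
qed (use A c in auto)
qed


lemma lin_choi: assumes lin: "lin_map n \<phi>" and A: "A \<in> carrier_mat n n"
  shows "\<phi> A = choi_map n (choi n \<phi>) A"
proof -
  have cE: "\<And>i j. \<phi> (Eunit n i j) \<in> carrier_mat n n" using lin by (simp add: lin_map_def)
  have dE: "\<And>i j. dim_row (\<phi> (Eunit n i j)) = n" "\<And>i j. dim_col (\<phi> (Eunit n i j)) = n"
    using cE by auto
  have sc: "\<And>i j. \<phi> (A $$ (i,j) \<cdot>\<^sub>m Eunit n i j) = A $$ (i,j) \<cdot>\<^sub>m \<phi> (Eunit n i j)"
    using lin by (simp add: lin_map_def)
  have "\<phi> A = \<phi> (msum n n (\<lambda>i. msum n n (\<lambda>j. A $$ (i,j) \<cdot>\<^sub>m Eunit n i j)))"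
    using mat_expand[OF A] by simp
  also have "\<dots> = msum n n (\<lambda>i. \<phi> (msum n n (\<lambda>j. A $$ (i,j) \<cdot>\<^sub>m Eunit n i j)))"
    by (rule lin_msum[OF lin]) (auto intro!: msum_carrier)
  also have "\<dots> = msum n n (\<lambda>i. msum n n (\<lambda>j. A $$ (i,j) \<cdot>\<^sub>m \<phi> (Eunit n i j)))"
    by (intro arg_cong[where f="msum n n"] ext, subst lin_msum[OF lin]) (auto simp: sc)
  also have "\<dots> = choi_map n (choi n \<phi>) A"
  proof (rule eq_matI)
    fix k l assume "k < dim_row (choi_map n (choi n \<phi>) A)" "l < dim_col (choi_map n (choi n \<phi>) A)"
    then have kl: "k < n" "l < n" by (auto simp: choi_map_def)
    have "msum n n (\<lambda>i. msum n n (\<lambda>j. A $$ (i,j) \<cdot>\<^sub>m \<phi> (Eunit n i j))) $$ (k,l)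
        = (\<Sum>i<n. \<Sum>j<n. A $$ (i,j) * \<phi> (Eunit n i j) $$ (k,l))"
      using kl cE by (simp add: msum_index msum_carrier dE)
    also have "\<dots> = choi_map n (choi n \<phi>) A $$ (k,l)"
      using kl by (simp add: choi_map_def choi_entry)
    finally show "msum n n (\<lambda>i. msum n n (\<lambda>j. A $$ (i,j) \<cdot>\<^sub>m \<phi> (Eunit n i j))) $$ (k,l) = choi_map n (choi n \<phi>) A $$ (k,l)" .
  next
    have "msum n n (\<lambda>i. msum n n (\<lambda>j. A $$ (i,j) \<cdot>\<^sub>m \<phi> (Eunit n i j))) \<in> carrier_mat n n"
      using cE by (intro msum_carrier) auto
    then show "dim_row (msum n n (\<lambda>i. msum n n (\<lambda>j. A $$ (i,j) \<cdot>\<^sub>m \<phi> (Eunit n i j)))) = dim_row (choi_map n (choi n \<phi>) A)"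
      "dim_col (msum n n (\<lambda>i. msum n n (\<lambda>j. A $$ (i,j) \<cdot>\<^sub>m \<phi> (Eunit n i j)))) = dim_col (choi_map n (choi n \<phi>) A)"
      by (auto simp: choi_map_def)
  qed
  finally show ?thesis .
qed

lemma Delta_dims[simp]: "dim_row (Delta n) = n*n" "dim_col (Delta n) = n*n"
  using Delta_carrier[of n] by auto

lemma block_carrier[simp]: "block n P a b \<in> carrier_mat n n" by (simp add: block_def)
lemma block_dims[simp]: "dim_row (block n P a b) = n" "dim_col (block n P a b) = n" by (simp_all add: block_def)

lemma comp_pos_cong: assumes eq: "\<And>A. A \<in> carrier_mat n n \<Longrightarrow> \<phi> A = \<psi> A" and cp: "comp_pos n \<phi>"
  shows "comp_pos n \<psi>"
proof -
  have linp: "lin_map n \<phi>" using cp by (simp add: comp_pos_def)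
  have lin: "lin_map n \<psi>" unfolding lin_map_def
  proof (intro conjI ballI allI)
    fix A :: "complex mat" assume A: "A \<in> carrier_mat n n"
    show "\<psi> A \<in> carrier_mat n n" using linp A eq[OF A, symmetric] by (simp add: lin_map_def)
  next
    fix A B :: "complex mat" assume A: "A \<in> carrier_mat n n" and B: "B \<in> carrier_mat n n"
    have AB: "A + B \<in> carrier_mat n n" using A B by simp
    show "\<psi> (A + B) = \<psi> A + \<psi> B" using linp A B eq[OF A, symmetric] eq[OF B, symmetric] eq[OF AB, symmetric]
      by (simp add: lin_map_def)
  next
    fix c :: complex and A :: "complex mat" assume A: "A \<in> carrier_mat n n"
    have cA: "c \<cdot>\<^sub>m A \<in> carrier_mat n n" using A by simp
    show "\<psi> (c \<cdot>\<^sub>m A) = c \<cdot>\<^sub>m \<psi> A" using linp A eq[OF A, symmetric] eq[OF cA, symmetric]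
      by (simp add: lin_map_def)
  qed
  have "ampl n k \<phi> P = ampl n k \<psi> P" for k P by (simp add: ampl_def eq)
  then show ?thesis using cp lin unfolding comp_pos_def by simp
qed

lemma choi_map_one: "choi_map n C (1\<^sub>m n) = ptrace1 n C"
proof (rule eq_matI)
  fix k l assume "k < dim_row (ptrace1 n C)" "l < dim_col (ptrace1 n C)"
  then have kl: "k < n" "l < n" by (auto simp: ptrace1_def)
  have "(\<Sum>i<n. \<Sum>j<n. 1\<^sub>m n $$ (i,j) * C $$ (i*n+k, j*n+l)) = (\<Sum>i<n. C $$ (i*n+k, i*n+l))"
    by (intro sum.cong refl) (simp add: mult_if0L sum.delta')
  then show "choi_map n C (1\<^sub>m n) $$ (k,l) = ptrace1 n C $$ (k,l)"
    using kl by (simp add: choi_map_def ptrace1_def)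
qed (auto simp: choi_map_def ptrace1_def)

lemma choi_map_add: assumes "C1 \<in> carrier_mat (n*n) (n*n)" "C2 \<in> carrier_mat (n*n) (n*n)"
  shows "choi_map n (C1 + C2) A = choi_map n C1 A + choi_map n C2 A"
  by (rule eq_matI) (use assms idx_bound in \<open>auto simp: choi_map_def distrib_left sum.distrib\<close>)

lemma choi_map_smult: assumes "C \<in> carrier_mat (n*n) (n*n)"
  shows "choi_map n (a \<cdot>\<^sub>m C) A = a \<cdot>\<^sub>m choi_map n C A"
  by (rule eq_matI) (use assms idx_bound in \<open>auto simp: choi_map_def sum_distrib_left mult_ac\<close>)

lemma choi_map_Delta: assumes A: "A \<in> carrier_mat n n" shows "choi_map n (Delta n) A = A"
proof (rule eq_matI)
  fix k l assume "k < dim_row A" "l < dim_col A"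
  then have kl: "k < n" "l < n" using A by auto
  have "(\<Sum>i<n. \<Sum>j<n. A $$ (i,j) * Delta n $$ (i*n+k, j*n+l)) = (\<Sum>i<n. \<Sum>j<n. if k = i \<and> l = j then A $$ (i,j) else 0)"
    using kl idx_bound by (intro sum.cong refl) (auto simp: Delta_entry divmod_simps)
  also have "\<dots> = A $$ (k,l)" using kl by (rule sum2_delta)
  finally show "choi_map n (Delta n) A $$ (k,l) = A $$ (k,l)" using kl by (simp add: choi_map_def)
qed (use A in \<open>auto simp: choi_map_def\<close>)

lemma choi_minus_id: assumes lin: "lin_map n \<phi>"
  shows "choi n (\<lambda>A. \<phi> A - A) = choi n \<phi> - Delta n"
proof (rule eq_matI)
  fix r c assume "r < dim_row (choi n \<phi> - Delta n)" "c < dim_col (choi n \<phi> - Delta n)"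
  then have rc: "r < n*n" "c < n*n" using Delta_carrier by auto
  have n: "n > 0" using rc by (cases n) auto
  have cb: "\<phi> (block n (Delta n) (r div n) (c div n)) \<in> carrier_mat n n" using lin by (simp add: lin_map_def)
  then have cbd: "dim_row (\<phi> (block n (Delta n) (r div n) (c div n))) = n" "dim_col (\<phi> (block n (Delta n) (r div n) (c div n))) = n"
    by auto
  have "block n (Delta n) (r div n) (c div n) $$ (r mod n, c mod n) = Delta n $$ (r,c)"
    using n by (simp add: block_def)
  then show "choi n (\<lambda>A. \<phi> A - A) $$ (r,c) = (choi n \<phi> - Delta n) $$ (r,c)"
    using rc n cbd by (simp add: choi_def ampl_def)
qed (simp_all add: choi_def ampl_def)


lemma ms_zero: "matricial_system n S \<Longrightarrow> 0\<^sub>m n n \<in> S"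
proof -
  assume ms: "matricial_system n S"
  have "(0::complex) \<cdot>\<^sub>m 1\<^sub>m n \<in> S" using ms by (simp add: matricial_system_def)
  moreover have "(0::complex) \<cdot>\<^sub>m 1\<^sub>m n = 0\<^sub>m n n" by (intro eq_matI) auto
  ultimately show ?thesis by simp
qed

lemma ms_msum: assumes ms: "matricial_system n S"
  shows "(\<And>i. i < m \<Longrightarrow> f i \<in> S) \<Longrightarrow> msum n m f \<in> S"
proof (induction m)
  case 0 then show ?case using ms_zero[OF ms] by simp
next
  case (Suc m) then show ?case using ms by (simp add: matricial_system_def)
qed

lemma kron_carrier[simp]: "kron n A B \<in> carrier_mat (n*n) (n*n)" by (simp add: kron_def)

lemma tspan_block: assumes ms: "matricial_system n S" and X: "X \<in> tensor_span n S"
  and ab: "a < n" "b < n"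
  shows "block n X a b \<in> S"
proof -
  from X obtain m A B where AB: "\<forall>i<m. A i \<in> carrier_mat n n \<and> B i \<in> S"
    and Xe: "X = msum (n*n) m (\<lambda>i. kron n (A i) (B i))" unfolding tensor_span_def by blast
  have Bc: "B i \<in> carrier_mat n n" if "i < m" for i using AB ms that by (auto simp: matricial_system_def)
  have Bd: "dim_row (B i) = n" "dim_col (B i) = n" if "i < m" for i using Bc[OF that] by auto
  have "block n X a b = msum n m (\<lambda>i. A i $$ (a,b) \<cdot>\<^sub>m B i)"
  proof (rule eq_matI)
    have c: "msum n m (\<lambda>i. A i $$ (a,b) \<cdot>\<^sub>m B i) \<in> carrier_mat n n" using Bc by (intro msum_carrier) auto
    then show "dim_row (block n X a b) = dim_row (msum n m (\<lambda>i. A i $$ (a,b) \<cdot>\<^sub>m B i))"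
      "dim_col (block n X a b) = dim_col (msum n m (\<lambda>i. A i $$ (a,b) \<cdot>\<^sub>m B i))" by auto
    fix k l assume "k < dim_row (msum n m (\<lambda>i. A i $$ (a,b) \<cdot>\<^sub>m B i))" "l < dim_col (msum n m (\<lambda>i. A i $$ (a,b) \<cdot>\<^sub>m B i))"
    then have kl: "k < n" "l < n" using c by auto
    have b1: "a*n+k < n*n" "b*n+l < n*n" using idx_bound ab kl by auto
    have "block n X a b $$ (k,l) = (\<Sum>i<m. kron n (A i) (B i) $$ (a*n+k, b*n+l))"
      using kl b1 by (simp add: block_def Xe msum_index)
    also have "\<dots> = (\<Sum>i<m. A i $$ (a,b) * B i $$ (k,l))"
      using kl b1 by (intro sum.cong refl) (simp add: kron_def divmod_simps)
    also have "\<dots> = msum n m (\<lambda>i. A i $$ (a,b) \<cdot>\<^sub>m B i) $$ (k,l)"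
      using kl Bc by (simp add: msum_index Bd)
    finally show "block n X a b $$ (k,l) = msum n m (\<lambda>i. A i $$ (a,b) \<cdot>\<^sub>m B i) $$ (k,l)" .
  qed
  also have "\<dots> \<in> S" using ms AB by (intro ms_msum) (auto simp: matricial_system_def)
  finally show ?thesis .
qed

lemma blocks_tspan: assumes X: "X \<in> carrier_mat (n*n) (n*n)"
  and bl: "\<And>a b. a < n \<Longrightarrow> b < n \<Longrightarrow> block n X a b \<in> S"
  shows "X \<in> tensor_span n S"
proof -
  define A where "A = (\<lambda>s. Eunit n (s div n) (s mod n))"
  define B where "B = (\<lambda>s. block n X (s div n) (s mod n))"
  have AB: "\<forall>i<n*n. A i \<in> carrier_mat n n \<and> B i \<in> S"
    using bl div_lt mod_lt by (auto simp: A_def B_def)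
  have "X = msum (n*n) (n*n) (\<lambda>i. kron n (A i) (B i))"
  proof (rule eq_matI)
    have c: "msum (n*n) (n*n) (\<lambda>i. kron n (A i) (B i)) \<in> carrier_mat (n*n) (n*n)" by (intro msum_carrier) auto
    then show "dim_row X = dim_row (msum (n*n) (n*n) (\<lambda>i. kron n (A i) (B i)))"
      "dim_col X = dim_col (msum (n*n) (n*n) (\<lambda>i. kron n (A i) (B i)))" using X by auto
    fix r c assume "r < dim_row (msum (n*n) (n*n) (\<lambda>i. kron n (A i) (B i)))" "c < dim_col (msum (n*n) (n*n) (\<lambda>i. kron n (A i) (B i)))"
    then have rc: "r < n*n" "c < n*n" using c by auto
    have n: "n > 0" using rc by (cases n) auto
    have "msum (n*n) (n*n) (\<lambda>i. kron n (A i) (B i)) $$ (r,c) = (\<Sum>s<n*n. kron n (A s) (B s) $$ (r,c))"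
      using rc by (simp add: msum_index)
    also have "\<dots> = (\<Sum>a<n. \<Sum>t<n. kron n (A (a*n+t)) (B (a*n+t)) $$ (r,c))"
      by (simp add: sum_split_mult)
    also have "\<dots> = (\<Sum>a<n. \<Sum>t<n. if r div n = a \<and> c div n = t then X $$ (a*n + r mod n, t*n + c mod n) else 0)"
      using rc n by (intro sum.cong refl) (auto simp: kron_def A_def B_def Eunit_def block_def divmod_simps mod_lt div_lt)
    also have "\<dots> = X $$ (r div n * n + r mod n, c div n * n + c mod n)"
      using div_lt[OF rc(1)] div_lt[OF rc(2)] by (rule sum2_delta)
    also have "\<dots> = X $$ (r,c)" by simp
    finally show "X $$ (r,c) = msum (n*n) (n*n) (\<lambda>i. kron n (A i) (B i)) $$ (r,c)" by simp
  qed
  then show ?thesis using AB unfolding tensor_span_def by blast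
qed

lemma vnorm_smult: "vnorm (vec n (\<lambda>i. d * v $ i)) = cmod d * vnorm (vec n (\<lambda>i. v $ i))"
proof -
  have "(\<Sum>i<n. (cmod (d * v $ i))\<^sup>2) = (cmod d)^2 * (\<Sum>i<n. (cmod (v $ i))\<^sup>2)"
    by (simp add: norm_mult power_mult_distrib sum_distrib_left)
  then show ?thesis by (simp add: vnorm_def real_sqrt_mult)
qed

lemma opnorm_scalar: assumes n: "n \<ge> 1" shows "opnorm n (d \<cdot>\<^sub>m 1\<^sub>m n) = cmod d"
proof -
  have mv: "(d \<cdot>\<^sub>m 1\<^sub>m n) *\<^sub>v v = vec n (\<lambda>i. d * v $ i)" if v: "v \<in> carrier_vec n" for v
  proof (rule eq_vecI)
    fix i assume "i < dim_vec (vec n (\<lambda>i. d * v $ i))"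
    then have i: "i < n" by simp
    have "((d \<cdot>\<^sub>m 1\<^sub>m n) *\<^sub>v v) $ i = (\<Sum>j<n. (d \<cdot>\<^sub>m 1\<^sub>m n) $$ (i,j) * v $ j)"
      by (rule mult_mat_vec_entry[OF _ v i]) simp
    also have "\<dots> = (\<Sum>j<n. if i = j then d * v $ j else 0)"
      using i by (intro sum.cong refl) auto
    also have "\<dots> = d * v $ i" using i by simp
    finally show "((d \<cdot>\<^sub>m 1\<^sub>m n) *\<^sub>v v) $ i = vec n (\<lambda>i. d * v $ i) $ i" using i by simp
  qed simp
  have vv: "vec n (\<lambda>i. v $ i) = v" if "v \<in> carrier_vec n" for v :: "complex vec"
    using that by (intro eq_vecI) auto
  define T where "T = {vnorm ((d \<cdot>\<^sub>m 1\<^sub>m n) *\<^sub>v v) | v. v \<in> carrier_vec n \<and> vnorm v \<le> 1}"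
  have T: "T = {cmod d * vnorm v | v. v \<in> carrier_vec n \<and> vnorm v \<le> 1}"
    unfolding T_def using mv vnorm_smult vv by metis
  define e :: "complex vec" where "e = unit_vec n 0"
  have e: "e \<in> carrier_vec n" "vnorm e = 1"
  proof -
    show "e \<in> carrier_vec n" by (simp add: e_def)
    have "(\<Sum>i<n. (cmod (e $ i))\<^sup>2) = (\<Sum>i<n. if i = 0 then 1 else 0)"
      by (intro sum.cong refl) (auto simp: e_def)
    also have "\<dots> = 1" using n by simp
    finally show "vnorm e = 1" by (simp add: vnorm_def e_def)
  qed
  have "cmod d \<in> T" unfolding T using e by (intro CollectI exI[of _ e]) auto
  moreover have "\<forall>x\<in>T. x \<le> cmod d" unfolding T
    by (auto intro: mult_left_le[OF _ norm_ge_zero])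
  ultimately have "Sup T = cmod d" by (intro cSup_eq_maximum) auto
  then show ?thesis by (simp add: opnorm_def T_def)
qed


lemma qf_lin: "qf m (\<lambda>i j. a * F i j + b * G i j) v = a * qf m F v + b * qf m G v"
  by (simp add: qf_def distrib_left distrib_right sum.distrib sum_distrib_left mult_ac)

lemma nonneg_scale: "a \<ge> 0 \<Longrightarrow> nonneg z \<Longrightarrow> nonneg (complex_of_real a * z)"
  by (simp add: nonneg_def)

lemma psd_smult: assumes A: "psd m A" and a: "a \<ge> 0" shows "psd m (complex_of_real a \<cdot>\<^sub>m A)"
proof -
  have C: "A \<in> carrier_mat m m" and F: "psdf m (\<lambda>i j. A $$ (i,j))" using A by (auto simp: psd_iff_psdf)
  have "psdf m (\<lambda>i j. (complex_of_real a \<cdot>\<^sub>m A) $$ (i,j))" unfolding psdf_def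
  proof
    fix v
    have "qf m (\<lambda>i j. (complex_of_real a \<cdot>\<^sub>m A) $$ (i,j)) v = qf m (\<lambda>i j. complex_of_real a * A $$ (i,j) + 0 * A $$ (i,j)) v"
      using C by (intro qf_cong) auto
    also have "\<dots> = complex_of_real a * qf m (\<lambda>i j. A $$ (i,j)) v" by (simp only: qf_lin) simp
    finally show "nonneg (qf m (\<lambda>i j. (complex_of_real a \<cdot>\<^sub>m A) $$ (i,j)) v)"
      using F a by (simp add: psdf_def nonneg_scale)
  qed
  then show ?thesis using C by (simp add: psd_iff_psdf)
qed

lemma psd_add: assumes A: "psd m A" and B: "psd m B" shows "psd m (A + B)"
proof -
  have CA: "A \<in> carrier_mat m m" and FA: "psdf m (\<lambda>i j. A $$ (i,j))" using A by (auto simp: psd_iff_psdf)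
  have CB: "B \<in> carrier_mat m m" and FB: "psdf m (\<lambda>i j. B $$ (i,j))" using B by (auto simp: psd_iff_psdf)
  have "psdf m (\<lambda>i j. (A + B) $$ (i,j))" unfolding psdf_def
  proof
    fix v
    have "qf m (\<lambda>i j. (A + B) $$ (i,j)) v = qf m (\<lambda>i j. 1 * A $$ (i,j) + 1 * B $$ (i,j)) v"
      using CA CB by (intro qf_cong) auto
    also have "\<dots> = qf m (\<lambda>i j. A $$ (i,j)) v + qf m (\<lambda>i j. B $$ (i,j)) v" by (simp only: qf_lin) simp
    finally show "nonneg (qf m (\<lambda>i j. (A + B) $$ (i,j)) v)"
      using FA FB by (simp add: psdf_def nonneg_def)
  qed
  then show ?thesis using CA CB by (simp add: psd_iff_psdf)
qed

lemma one_smult_id: "(1::complex) \<cdot>\<^sub>m 1\<^sub>m n = 1\<^sub>m n" by (intro eq_matI) auto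

lemma claim1:
  assumes n: "n \<ge> 1" and ms: "matricial_system n S" and phi: "\<phi> \<in> CP1 n"
    and rng: "\<forall>A \<in> carrier_mat n n. \<phi> A \<in> S" and cpm: "comp_pos n (\<lambda>A. \<phi> A - A)"
  shows "opnorm n (\<phi> (1\<^sub>m n)) \<ge> 1 \<and> inverse (opnorm n (\<phi> (1\<^sub>m n))) \<in> {lam. \<exists>X. X \<in> carrier_mat (n*n) (n*n) \<and>
      ptrace1 n X = complex_of_real (1 - lam) \<cdot>\<^sub>m 1\<^sub>m n \<and>
      X + complex_of_real lam \<cdot>\<^sub>m Delta n \<in> tensor_span n S \<and>
      psd (n*n) X}"
proof -
  have cp: "comp_pos n \<phi>" and c1: "\<forall>c. \<exists>d. \<phi> (c \<cdot>\<^sub>m 1\<^sub>m n) = d \<cdot>\<^sub>m 1\<^sub>m n" using phi by (auto simp: CP1_def)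
  have lin: "lin_map n \<phi>" using cp by (simp add: comp_pos_def)
  obtain d where phi1: "\<phi> (1\<^sub>m n) = d \<cdot>\<^sub>m 1\<^sub>m n" using c1 one_smult_id by metis
  define \<psi> where "\<psi> = (\<lambda>A. \<phi> A - A)"
  have linp: "lin_map n \<psi>" using cpm by (simp add: comp_pos_def \<psi>_def)
  have psi1: "\<psi> (1\<^sub>m n) = (d - 1) \<cdot>\<^sub>m 1\<^sub>m n" unfolding \<psi>_def phi1 by (intro eq_matI) (auto simp: algebra_simps)
  have pt: "ptrace1 n (choi n \<psi>) = (d - 1) \<cdot>\<^sub>m 1\<^sub>m n"
    using choi_map_one[of n "choi n \<psi>"] lin_choi[OF linp, of "1\<^sub>m n"] psi1 by simp
  have cpsd: "psd (n*n) (choi n \<psi>)" using choi_psd cpm unfolding \<psi>_def by blast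
  then have cf: "psdf (n*n) (\<lambda>i j. choi n \<psi> $$ (i,j))" by (simp add: psd_iff_psdf)
  have "ptrace1 n (choi n \<psi>) $$ (0,0) = (\<Sum>i<n. choi n \<psi> $$ (i*n, i*n))"
    using n by (simp add: ptrace1_def)
  moreover have "nonneg (\<Sum>i<n. choi n \<psi> $$ (i*n, i*n))"
    using n idx_bound[of _ n 0] by (intro nonneg_sum psdf_diag[OF cf]) auto
  moreover have "ptrace1 n (choi n \<psi>) $$ (0,0) = d - 1" using pt n by simp
  ultimately have nd: "nonneg (d - 1)" by simp
  define c where "c = Re d"
  have dc: "d = complex_of_real c" using nd c_def by (simp add: nonneg_def complex_eq_iff)
  have c1': "c \<ge> 1" using nd dc by (simp add: nonneg_def)
  have on: "opnorm n (\<phi> (1\<^sub>m n)) = c" using phi1 opnorm_scalar[OF n] dc c1' by simp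
  define X where "X = complex_of_real (inverse c) \<cdot>\<^sub>m choi n \<psi>"
  have Xc: "X \<in> carrier_mat (n*n) (n*n)" by (simp add: X_def choi_carrier)
  have chd: "dim_row (choi n \<psi>) = n*n" "dim_col (choi n \<psi>) = n*n" by (simp_all add: choi_def ampl_def)
  have Xpt: "ptrace1 n X = complex_of_real (1 - inverse c) \<cdot>\<^sub>m 1\<^sub>m n"
  proof -
    have "ptrace1 n X = choi_map n X (1\<^sub>m n)" by (simp add: choi_map_one)
    also have "\<dots> = complex_of_real (inverse c) \<cdot>\<^sub>m choi_map n (choi n \<psi>) (1\<^sub>m n)"
      unfolding X_def by (rule choi_map_smult[OF choi_carrier])
    also have "choi_map n (choi n \<psi>) (1\<^sub>m n) = (d - 1) \<cdot>\<^sub>m 1\<^sub>m n"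
      using choi_map_one pt by simp
    also have "complex_of_real (inverse c) \<cdot>\<^sub>m ((d - 1) \<cdot>\<^sub>m 1\<^sub>m n) = complex_of_real (1 - inverse c) \<cdot>\<^sub>m 1\<^sub>m n"
      using c1' dc by (intro eq_matI) (auto simp: field_simps)
    finally show ?thesis .
  qed
  have Xpsd: "psd (n*n) X" unfolding X_def using c1' by (intro psd_smult cpsd) simp
  have Xt: "X + complex_of_real (inverse c) \<cdot>\<^sub>m Delta n \<in> tensor_span n S"
  proof (rule blocks_tspan)
    show "X + complex_of_real (inverse c) \<cdot>\<^sub>m Delta n \<in> carrier_mat (n*n) (n*n)" using Xc Delta_carrier[of n] by (intro add_carrier_mat smult_carrier_mat)
    fix a b assume ab: "a < n" "b < n"
    have cE: "\<phi> (Eunit n a b) \<in> carrier_mat n n" using lin by (simp add: lin_map_def)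
    have "block n (X + complex_of_real (inverse c) \<cdot>\<^sub>m Delta n) a b = complex_of_real (inverse c) \<cdot>\<^sub>m \<phi> (Eunit n a b)"
    proof (rule eq_matI)
      fix k l assume "k < dim_row (complex_of_real (inverse c) \<cdot>\<^sub>m \<phi> (Eunit n a b))"
        "l < dim_col (complex_of_real (inverse c) \<cdot>\<^sub>m \<phi> (Eunit n a b))"
      then have kl: "k < n" "l < n" using cE by auto
      have b1: "a*n+k < n*n" "b*n+l < n*n" using idx_bound ab kl by auto
      have ce: "choi n \<psi> $$ (a*n+k, b*n+l) = \<phi> (Eunit n a b) $$ (k,l) - Delta n $$ (a*n+k, b*n+l)"
        using choi_minus_id[OF lin] b1 choi_entry[OF ab kl, of \<phi>] unfolding \<psi>_def
        by (simp add: choi_carrier)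
      show "block n (X + complex_of_real (inverse c) \<cdot>\<^sub>m Delta n) a b $$ (k,l) = (complex_of_real (inverse c) \<cdot>\<^sub>m \<phi> (Eunit n a b)) $$ (k,l)"
        using kl b1 cE ce Xc chd by (simp add: block_def X_def ring_distribs)
    qed (use cE in auto)
    also have "\<dots> \<in> S" using ms rng cE by (simp add: matricial_system_def)
    finally show "block n (X + complex_of_real (inverse c) \<cdot>\<^sub>m Delta n) a b \<in> S" .
  qed
  show ?thesis using on c1' Xc Xpt Xt Xpsd by auto
qed


lemma claim2:
  assumes n: "n \<ge> 1" and ms: "matricial_system n S" and lam: "lam > 0"
    and Xc: "X \<in> carrier_mat (n*n) (n*n)"
    and Xpt: "ptrace1 n X = complex_of_real (1 - lam) \<cdot>\<^sub>m 1\<^sub>m n"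
    and Xt: "X + complex_of_real lam \<cdot>\<^sub>m Delta n \<in> tensor_span n S"
    and Xpsd: "psd (n*n) X"
  shows "\<exists>\<phi>. \<phi> \<in> CP1 n \<and> (\<forall>A \<in> carrier_mat n n. \<phi> A \<in> S) \<and> comp_pos n (\<lambda>A. \<phi> A - A)
           \<and> opnorm n (\<phi> (1\<^sub>m n)) = inverse lam"
proof -
  define Y where "Y = complex_of_real (inverse lam) \<cdot>\<^sub>m X"
  define C where "C = Y + Delta n"
  have Yc: "Y \<in> carrier_mat (n*n) (n*n)" using Xc by (simp add: Y_def)
  have Cc: "C \<in> carrier_mat (n*n) (n*n)" using Yc Delta_carrier[of n] by (simp add: C_def)
  have Ypsd: "psd (n*n) Y" unfolding Y_def using lam by (intro psd_smult Xpsd) simp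
  have Cpsd: "psd (n*n) C" unfolding C_def by (intro psd_add Ypsd psd_Delta)
  define \<phi> where "\<phi> = choi_map n C"
  have cp: "comp_pos n \<phi>" unfolding \<phi>_def by (rule choi_map_cp[OF Cpsd])
  have lin: "lin_map n \<phi>" using cp by (simp add: comp_pos_def)
  have addC: "\<phi> A = choi_map n Y A + A" if A: "A \<in> carrier_mat n n" for A
    unfolding \<phi>_def C_def using choi_map_add[OF Yc Delta_carrier] choi_map_Delta[OF A] by simp
  have phi1: "\<phi> (1\<^sub>m n) = complex_of_real (inverse lam) \<cdot>\<^sub>m 1\<^sub>m n"
  proof -
    have "\<phi> (1\<^sub>m n) = complex_of_real (inverse lam) \<cdot>\<^sub>m choi_map n X (1\<^sub>m n) + 1\<^sub>m n"
      using addC[of "1\<^sub>m n"] choi_map_smult[OF Xc] by (simp add: Y_def)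
    also have "\<dots> = complex_of_real (inverse lam) \<cdot>\<^sub>m (complex_of_real (1 - lam) \<cdot>\<^sub>m 1\<^sub>m n) + 1\<^sub>m n"
      using Xpt choi_map_one by simp
    also have "\<dots> = complex_of_real (inverse lam) \<cdot>\<^sub>m 1\<^sub>m n"
      using lam by (intro eq_matI) (auto simp: field_simps)
    finally show ?thesis .
  qed
  have CP1: "\<phi> \<in> CP1 n" unfolding CP1_def
  proof (intro CollectI conjI cp allI)
    fix c :: complex
    have "\<phi> (c \<cdot>\<^sub>m 1\<^sub>m n) = c \<cdot>\<^sub>m \<phi> (1\<^sub>m n)" using lin by (simp add: lin_map_def)
    also have "\<dots> = (c * complex_of_real (inverse lam)) \<cdot>\<^sub>m 1\<^sub>m n" unfolding phi1 by (intro eq_matI) auto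
    finally show "\<exists>d. \<phi> (c \<cdot>\<^sub>m 1\<^sub>m n) = d \<cdot>\<^sub>m 1\<^sub>m n" by blast
  qed
  have blk: "block n C i j \<in> S" if ij: "i < n" "j < n" for i j
  proof -
    have "block n C i j = complex_of_real (inverse lam) \<cdot>\<^sub>m block n (X + complex_of_real lam \<cdot>\<^sub>m Delta n) i j"
    proof (rule eq_matI)
      fix k l assume "k < dim_row (complex_of_real (inverse lam) \<cdot>\<^sub>m block n (X + complex_of_real lam \<cdot>\<^sub>m Delta n) i j)"
        "l < dim_col (complex_of_real (inverse lam) \<cdot>\<^sub>m block n (X + complex_of_real lam \<cdot>\<^sub>m Delta n) i j)"
      then have kl: "k < n" "l < n" by auto
      have b1: "i*n+k < n*n" "j*n+l < n*n" using idx_bound ij kl by auto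
      show "block n C i j $$ (k,l) = (complex_of_real (inverse lam) \<cdot>\<^sub>m block n (X + complex_of_real lam \<cdot>\<^sub>m Delta n) i j) $$ (k,l)"
        using kl b1 Xc lam by (simp add: block_def C_def Y_def field_simps)
    qed auto
    also have "\<dots> \<in> S" using tspan_block[OF ms Xt ij] ms by (simp add: matricial_system_def)
    finally show ?thesis .
  qed
  have rng: "\<forall>A \<in> carrier_mat n n. \<phi> A \<in> S"
  proof
    fix A :: "complex mat" assume A: "A \<in> carrier_mat n n"
    have "\<phi> A = msum n n (\<lambda>i. msum n n (\<lambda>j. A $$ (i,j) \<cdot>\<^sub>m block n C i j))"
    proof (rule eq_matI)
      have cc: "msum n n (\<lambda>i. msum n n (\<lambda>j. A $$ (i,j) \<cdot>\<^sub>m block n C i j)) \<in> carrier_mat n n"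
        by (intro msum_carrier) auto
      then show "dim_row (\<phi> A) = dim_row (msum n n (\<lambda>i. msum n n (\<lambda>j. A $$ (i,j) \<cdot>\<^sub>m block n C i j)))"
        "dim_col (\<phi> A) = dim_col (msum n n (\<lambda>i. msum n n (\<lambda>j. A $$ (i,j) \<cdot>\<^sub>m block n C i j)))"
        by (auto simp: \<phi>_def choi_map_def)
      fix k l assume "k < dim_row (msum n n (\<lambda>i. msum n n (\<lambda>j. A $$ (i,j) \<cdot>\<^sub>m block n C i j)))"
        "l < dim_col (msum n n (\<lambda>i. msum n n (\<lambda>j. A $$ (i,j) \<cdot>\<^sub>m block n C i j)))"
      then have kl: "k < n" "l < n" using cc by auto
      show "\<phi> A $$ (k,l) = msum n n (\<lambda>i. msum n n (\<lambda>j. A $$ (i,j) \<cdot>\<^sub>m block n C i j)) $$ (k,l)"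
        using kl by (simp add: \<phi>_def choi_map_def msum_index msum_carrier block_def)
    qed
    also have "\<dots> \<in> S"
      using blk ms by (intro ms_msum[OF ms]) (auto simp: matricial_system_def)
    finally show "\<phi> A \<in> S" .
  qed
  have cpm: "comp_pos n (\<lambda>A. \<phi> A - A)"
  proof (rule comp_pos_cong[OF _ choi_map_cp[OF Ypsd]])
    fix A :: "complex mat" assume A: "A \<in> carrier_mat n n"
    have c: "choi_map n Y A \<in> carrier_mat n n" by (simp add: choi_map_def)
    show "choi_map n Y A = \<phi> A - A" unfolding addC[OF A] using A c by (intro eq_matI) auto
  qed
  have on: "opnorm n (\<phi> (1\<^sub>m n)) = inverse lam" using phi1 opnorm_scalar[OF n] lam by (simp add: norm_inverse)
  show ?thesis using CP1 rng cpm on by blast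
qed


lemma nonneg_cnj: "nonneg (cnj z * z)"
proof -
  have "cnj z * z = complex_of_real ((cmod z)^2)" by (metis complex_norm_square mult.commute)
  then show ?thesis by (simp add: nonneg_def)
qed

lemma cs_sum: "Re (cnj (\<Sum>a<n. x a) * (\<Sum>a<n. x a)) \<le> real n * Re (\<Sum>a<(n::nat). cnj (x a) * x a)"
proof -
  define S where "S = (\<Sum>a<n. x a)"
  define Q where "Q = (\<Sum>a<n. cnj (x a) * x a)"
  define P where "P = (\<Sum>a<n. \<Sum>b<n. cnj (x a) * x b)"
  have P1: "cnj S * S = P" by (simp add: S_def P_def cnj_sum sum_product)
  have P2: "(\<Sum>a<n. \<Sum>b<n. cnj (x b) * x a) = P" unfolding P_def by (rule sum.swap)
  have "(\<Sum>a<n. \<Sum>b<n. cnj (x a - x b) * (x a - x b)) =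
      (\<Sum>a<n. \<Sum>b<n. cnj (x a) * x a) + (\<Sum>a<n. \<Sum>b<n. cnj (x b) * x b)
      - (\<Sum>a<n. \<Sum>b<n. cnj (x a) * x b) - (\<Sum>a<n. \<Sum>b<n. cnj (x b) * x a)"
    by (simp add: algebra_simps sum_subtractf sum.distrib)
  also have "\<dots> = 2 * of_nat n * Q - 2 * (cnj S * S)"
    unfolding P1 P2 P_def[symmetric] by (simp add: Q_def sum_distrib_left mult.assoc)
  finally have "(\<Sum>a<n. \<Sum>b<n. cnj (x a - x b) * (x a - x b)) = 2 * of_nat n * Q - 2 * (cnj S * S)" .
  moreover have "nonneg (\<Sum>a<n. \<Sum>b<n. cnj (x a - x b) * (x a - x b))"
    by (intro nonneg_sum nonneg_cnj)
  ultimately have "nonneg (2 * of_nat n * Q - 2 * (cnj S * S))" by simp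
  then show ?thesis unfolding S_def[symmetric] Q_def[symmetric] by (simp add: nonneg_def)
qed

lemma qf_Delta: "qf (n*n) (\<lambda>i j. Delta n $$ (i,j)) v = cnj (\<Sum>b<n. v (b*n+b)) * (\<Sum>b<n. v (b*n+b))"
proof (cases "n = 0")
  case True then show ?thesis by (simp add: qf_def)
next
  case False
  define S where "S = (\<Sum>b<n. v (b*n+b))"
  have "qf (n*n) (\<lambda>i j. Delta n $$ (i,j)) v =
     qf (n*n) (\<lambda>r c. if r div n = r mod n \<and> c div n = c mod n then 1 else 0) v"
    by (rule qf_cong) (simp add: Delta_entry)
  also have "\<dots> = (\<Sum>a<n. \<Sum>t<n. cnj (v (a*n+t)) * (\<Sum>b<n. \<Sum>u<n. (if a = t \<and> b = u then 1 else 0) * v (b*n+u)))"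
    using False by (simp add: qf_def sum_split_mult divmod_simps)
  also have "\<dots> = (\<Sum>a<n. \<Sum>t<n. cnj (v (a*n+t)) * (if a = t then S else 0))"
  proof (intro sum.cong refl)
    fix a t assume "a \<in> {..<n}" "t \<in> {..<n}"
    have "(\<Sum>b<n. \<Sum>u<n. (if a = t \<and> b = u then 1 else 0) * v (b*n+u)) = (\<Sum>b<n. if a = t then v (b*n+b) else 0)"
      by (intro sum.cong refl) (auto simp: mult_if0L sum.delta)
    then show "cnj (v (a*n+t)) * (\<Sum>b<n. \<Sum>u<n. (if a = t \<and> b = u then 1 else 0) * v (b*n+u)) =
        cnj (v (a*n+t)) * (if a = t then S else 0)" by (simp add: S_def)
  qed
  also have "\<dots> = (\<Sum>a<n. cnj (v (a*n+a)) * S)"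
    by (intro sum.cong refl) (simp add: mult_if0R sum.delta')
  also have "\<dots> = cnj S * S" by (simp add: S_def cnj_sum sum_distrib_right)
  finally show ?thesis by (simp add: S_def)
qed

lemma idx_eq: "k < n \<Longrightarrow> l < n \<Longrightarrow> (a*n+k = b*n+(l::nat)) \<longleftrightarrow> a = b \<and> k = l"
  by (metis divmod_simps)

lemma claim3:
  assumes n: "n \<ge> 1" and ms: "matricial_system n S"
  shows "\<exists>X. X \<in> carrier_mat (n*n) (n*n) \<and>
      ptrace1 n X = complex_of_real (1 - inverse (real n^2)) \<cdot>\<^sub>m 1\<^sub>m n \<and>
      X + complex_of_real (inverse (real n^2)) \<cdot>\<^sub>m Delta n \<in> tensor_span n S \<and>
      psd (n*n) X"
proof -
  define mu :: real where "mu = inverse (real n)"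
  define lm :: real where "lm = inverse (real n^2)"
  define X where "X = complex_of_real mu \<cdot>\<^sub>m 1\<^sub>m (n*n) + complex_of_real (- lm) \<cdot>\<^sub>m Delta n"
  have Xc: "X \<in> carrier_mat (n*n) (n*n)" unfolding X_def using Delta_carrier[of n] by simp
  have Xe: "X $$ (r,c) = complex_of_real mu * (if r = c then 1 else 0) - complex_of_real lm * Delta n $$ (r,c)"
    if "r < n*n" "c < n*n" for r c using that by (simp add: X_def)
  have pt: "ptrace1 n X = complex_of_real (1 - lm) \<cdot>\<^sub>m 1\<^sub>m n"
  proof (rule eq_matI)
    fix k l assume "k < dim_row (complex_of_real (1 - lm) \<cdot>\<^sub>m 1\<^sub>m n)" "l < dim_col (complex_of_real (1 - lm) \<cdot>\<^sub>m 1\<^sub>m n)"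
    then have kl: "k < n" "l < n" by auto
    have "ptrace1 n X $$ (k,l) = (\<Sum>i<n. complex_of_real mu * (if k = l then 1 else 0) - complex_of_real lm * (if i = k \<and> i = l then 1 else 0))"
      using kl idx_bound by (simp add: ptrace1_def Xe Delta_entry divmod_simps idx_eq)
    also have "\<dots> = of_nat n * complex_of_real mu * (if k = l then 1 else 0) - complex_of_real lm * (if k = l then 1 else 0)"
      using kl by (simp add: sum_subtractf if_distrib[of "\<lambda>x. _ * x"] cong: if_cong) (auto simp: sum.delta intro!: sum.neutral)
    also have "\<dots> = (complex_of_real (1 - lm) \<cdot>\<^sub>m 1\<^sub>m n) $$ (k,l)"
      using kl n by (simp add: mu_def field_simps)
    finally show "ptrace1 n X $$ (k,l) = (complex_of_real (1 - lm) \<cdot>\<^sub>m 1\<^sub>m n) $$ (k,l)" .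
  qed (auto simp: ptrace1_def)
  have tsp: "X + complex_of_real lm \<cdot>\<^sub>m Delta n \<in> tensor_span n S"
  proof (rule blocks_tspan)
    show "X + complex_of_real lm \<cdot>\<^sub>m Delta n \<in> carrier_mat (n*n) (n*n)" using Xc Delta_carrier[of n]
      by (intro add_carrier_mat smult_carrier_mat)
    fix a b assume ab: "a < n" "b < n"
    have "block n (X + complex_of_real lm \<cdot>\<^sub>m Delta n) a b = complex_of_real (if a = b then mu else 0) \<cdot>\<^sub>m 1\<^sub>m n"
    proof (rule eq_matI)
      fix k l assume "k < dim_row (complex_of_real (if a = b then mu else 0) \<cdot>\<^sub>m 1\<^sub>m n)" "l < dim_col (complex_of_real (if a = b then mu else 0) \<cdot>\<^sub>m 1\<^sub>m n)"
      then have kl: "k < n" "l < n" by auto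
      have b1: "a*n+k < n*n" "b*n+l < n*n" using idx_bound ab kl by auto
      show "block n (X + complex_of_real lm \<cdot>\<^sub>m Delta n) a b $$ (k,l) = (complex_of_real (if a = b then mu else 0) \<cdot>\<^sub>m 1\<^sub>m n) $$ (k,l)"
        using kl b1 Xc by (simp add: block_def Xe idx_eq)
    qed auto
    also have "\<dots> \<in> S" using ms by (simp add: matricial_system_def)
    finally show "block n (X + complex_of_real lm \<cdot>\<^sub>m Delta n) a b \<in> S" .
  qed
  have psdX: "psd (n*n) X" unfolding psd_iff_psdf
  proof (intro conjI Xc, unfold psdf_def, intro allI)
    fix v :: "nat \<Rightarrow> complex"
    define S where "S = (\<Sum>b<n. v (b*n+b))"
    define Q where "Q = (\<Sum>r<n*n. cnj (v r) * v r)"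
    have "qf (n*n) (\<lambda>i j. X $$ (i,j)) v = qf (n*n) (\<lambda>i j. complex_of_real mu * (if i = j then 1 else 0) + complex_of_real (-lm) * Delta n $$ (i,j)) v"
      by (rule qf_cong) (simp add: Xe)
    also have "\<dots> = complex_of_real mu * qf (n*n) (\<lambda>i j. if i = j then 1 else 0) v + complex_of_real (-lm) * (cnj S * S)"
      by (simp only: qf_lin qf_Delta S_def)
    also have "qf (n*n) (\<lambda>i j. if i = j then 1 else 0) v = Q"
      by (simp add: qf_def Q_def mult_if0L sum.delta)
    finally have qe: "qf (n*n) (\<lambda>i j. X $$ (i,j)) v = complex_of_real mu * Q - complex_of_real lm * (cnj S * S)" by simp
    have QR: "Im Q = 0" unfolding Q_def by (simp add: Im_sum)
    have cs: "Re (cnj S * S) \<le> real n * Re (\<Sum>a<n. cnj (v (a*n+a)) * v (a*n+a))"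
      unfolding S_def by (rule cs_sum)
    have "Re (\<Sum>a<n. cnj (v (a*n+a)) * v (a*n+a)) \<le> Re Q"
    proof -
      have "Re (\<Sum>a<n. cnj (v (a*n+a)) * v (a*n+a)) = (\<Sum>a<n. Re (cnj (v (a*n+a)) * v (a*n+a)))"
        by (rule Re_sum)
      also have "\<dots> \<le> (\<Sum>a<n. \<Sum>t<n. Re (cnj (v (a*n+t)) * v (a*n+t)))"
      proof (rule sum_mono)
        fix a assume "a \<in> {..<n}"
        then show "Re (cnj (v (a*n+a)) * v (a*n+a)) \<le> (\<Sum>t<n. Re (cnj (v (a*n+t)) * v (a*n+t)))"
          using member_le_sum[of a "{..<n}" "\<lambda>t. Re (cnj (v (a*n+t)) * v (a*n+t))"] nonneg_cnj
          by (auto simp: nonneg_def)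
      qed
      also have "\<dots> = Re Q"
        unfolding Q_def sum_split_mult Re_sum by simp
      finally show ?thesis .
    qed
    then have "Re (cnj S * S) \<le> real n * Re Q" using cs n by (meson order_trans mult_left_mono of_nat_0_le_iff)
    then have "lm * Re (cnj S * S) \<le> mu * Re Q"
    proof -
      assume h: "Re (cnj S * S) \<le> real n * Re Q"
      have l0: "lm \<ge> 0" by (simp add: lm_def)
      have "lm * Re (cnj S * S) \<le> lm * (real n * Re Q)" by (rule mult_left_mono[OF h l0])
      also have "lm * (real n * Re Q) = mu * Re Q" using n by (simp add: lm_def mu_def power2_eq_square)
      finally show ?thesis .
    qed
    then show "nonneg (qf (n*n) (\<lambda>i j. X $$ (i,j)) v)" unfolding qe using QR by (simp add: nonneg_def)
  qed
  show ?thesis using Xc pt tsp psdX unfolding lm_def by blast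
qed


theorem proposition4p1:
  fixes n :: nat and S :: "complex mat set"
  assumes "n \<ge> 1" and "matricial_system n S"
  shows "inverse (Ind_CP n S) = sdp_value n S"
proof -
  note n = assms(1) and ms = assms(2)
  define T where "T = {opnorm n (\<phi> (1\<^sub>m n)) | \<phi>. \<phi> \<in> CP1 n \<and>
      (\<forall>A \<in> carrier_mat n n. \<phi> A \<in> S) \<and> comp_pos n (\<lambda>A. \<phi> A - A)}"
  define L where "L = {lam. \<exists>X. X \<in> carrier_mat (n*n) (n*n) \<and>
      ptrace1 n X = complex_of_real (1 - lam) \<cdot>\<^sub>m 1\<^sub>m n \<and>
      X + complex_of_real lam \<cdot>\<^sub>m Delta n \<in> tensor_span n S \<and>
      psd (n*n) X}"
  have Ind: "Ind_CP n S = Inf T" by (simp add: Ind_CP_def T_def)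
  have sdp: "sdp_value n S = Sup L" by (simp add: sdp_value_def L_def)
  have F1: "c \<ge> 1 \<and> inverse c \<in> L" if "c \<in> T" for c
  proof -
    from that obtain \<phi> where c: "c = opnorm n (\<phi> (1\<^sub>m n))" and p1: "\<phi> \<in> CP1 n"
      and p2: "\<forall>A \<in> carrier_mat n n. \<phi> A \<in> S" and p3: "comp_pos n (\<lambda>A. \<phi> A - A)"
      unfolding T_def by blast
    have "opnorm n (\<phi> (1\<^sub>m n)) \<ge> 1 \<and> inverse (opnorm n (\<phi> (1\<^sub>m n))) \<in> L"
      unfolding L_def by (rule claim1[OF n ms p1 p2 p3])
    then show ?thesis unfolding c .
  qed
  have F2: "inverse lam \<in> T" if "lam \<in> L" "lam > 0" for lam
  proof -
    from that(1) obtain X where X: "X \<in> carrier_mat (n*n) (n*n)"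
      "ptrace1 n X = complex_of_real (1 - lam) \<cdot>\<^sub>m 1\<^sub>m n"
      "X + complex_of_real lam \<cdot>\<^sub>m Delta n \<in> tensor_span n S" "psd (n*n) X" unfolding L_def by blast
    from claim2[OF n ms that(2) X] obtain \<phi> where p1: "\<phi> \<in> CP1 n"
      and p2: "\<forall>A \<in> carrier_mat n n. \<phi> A \<in> S" and p3: "comp_pos n (\<lambda>A. \<phi> A - A)"
      and p4: "opnorm n (\<phi> (1\<^sub>m n)) = inverse lam" by blast
    show ?thesis unfolding T_def
      by (rule CollectI, rule exI[of _ \<phi>]) (use p1 p2 p3 p4 in auto)
  qed
  define lam0 :: real where "lam0 = inverse (real n^2)"
  have l0: "lam0 \<in> L" using claim3[OF n ms] unfolding L_def lam0_def by blast
  have l0p: "lam0 > 0" using n by (simp add: lam0_def)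
  have Tne: "T \<noteq> {}" using F2[OF l0 l0p] by blast
  have Tbd: "bdd_below T" using F1 by (intro bdd_belowI[of _ 1]) blast
  define t where "t = Inf T"
  have t1: "t \<ge> 1" unfolding t_def using F1 Tne by (intro cInf_greatest) auto
  have "Sup L = inverse t"
  proof (rule cSup_eq_non_empty)
    show "L \<noteq> {}" using l0 by blast
  next
    fix lam assume lam: "lam \<in> L"
    show "lam \<le> inverse t"
    proof (cases "lam > 0")
      case False
      have "inverse t > 0" using t1 by simp
      then show ?thesis using False by linarith
    next
      case True
      have "t \<le> inverse lam" unfolding t_def using F2[OF lam True] Tbd by (rule cInf_lower)
      then have "inverse (inverse lam) \<le> inverse t" using t1 by (intro le_imp_inverse_le) auto
      then show ?thesis by simp
    qed
  next
    fix y assume ub: "\<And>lam. lam \<in> L \<Longrightarrow> lam \<le> y"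
    have yp: "y > 0" using ub[OF l0] l0p by simp
    have "inverse y \<le> c" if c: "c \<in> T" for c
    proof -
      have c1: "c \<ge> 1" and ic: "inverse c \<in> L" using F1[OF c] by auto
      have "inverse c \<le> y" using ub[OF ic] .
      then have "inverse y \<le> inverse (inverse c)" using c1 by (intro le_imp_inverse_le) auto
      then show ?thesis by simp
    qed
    then have "inverse y \<le> t" unfolding t_def using Tne by (intro cInf_greatest) auto
    then have "inverse t \<le> inverse (inverse y)" using yp by (intro le_imp_inverse_le) auto
    then show "inverse t \<le> y" by simp
  qed
  then show ?thesis unfolding Ind sdp t_def by simp
qed


end
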